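(* Let $\mathbf{A}\in\mathbb{C}^{M\times N_a}$ and $\mathbf{B}\in\mathbb{C}^{M\times N_b}$ have unit-$\ell_2$-norm columns, let $\mathbf{D}=[\mathbf{A}\ \mathbf{B}]$ with coherence parameters $\mu_a,\mu_b,\mu_m$ and $\mu_d=\max\{\mu_a,\mu_b,\mu_m\}$, and assume $\mu_b\le\mu_a$. For each integer $w\ge1$ let $\delta_w$ be the smallest number such that $(1-\delta_w)\|\mathbf{w}\|_2^2\le\|\mathbf{D}\mathbf{w}\|_2^2\le(1+\delta_w)\|\mathbf{w}\|_2^2$ for all $\mathbf{w}\in\mathbb{C}^{N_a+N_b}$ with at most $w$ nonzero entries. Then $$\delta_w\le\min\left\{\frac12\Big(\mu_a(w-2)+w\sqrt{\mu_a^2+\mu_m^2}\Big),\ \mu_d(w-1)\right\}.$$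
   Context: Coherence parameters: $\mu_a=\max_{k\ne\ell}|\mathbf{a}_k^H\mathbf{a}_\ell|$, $\mu_b=\max_{k\ne\ell}|\mathbf{b}_k^H\mathbf{b}_\ell|$, $\mu_m=\max_{k,\ell}|\mathbf{a}_k^H\mathbf{b}_\ell|$, where $\mathbf{a}_k,\mathbf{b}_\ell$ are the columns of $\mathbf{A},\mathbf{B}$. *)

theory Defs
  imports Complex_Main
begin

text \<open>Matrices are represented as functions nat \<Rightarrow> nat \<Rightarrow> complex (row index, column index);
  only entries with row < M and column < number of columns matter.\<close>

definition inner_col :: "nat \<Rightarrow> (nat \<Rightarrow> nat \<Rightarrow> complex) \<Rightarrow> nat \<Rightarrow> (nat \<Rightarrow> nat \<Rightarrow> complex) \<Rightarrow> nat \<Rightarrow> complex" where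
  "inner_col M X k Y l = (\<Sum>i<M. cnj (X i k) * Y i l)"

definition unit_cols :: "nat \<Rightarrow> nat \<Rightarrow> (nat \<Rightarrow> nat \<Rightarrow> complex) \<Rightarrow> bool" where
  "unit_cols M N X \<longleftrightarrow> (\<forall>k<N. (\<Sum>i<M. (cmod (X i k))\<^sup>2) = 1)"

text \<open>Coherence parameters (maximum over an empty index set is taken to be 0).\<close>
definition mu_self :: "nat \<Rightarrow> nat \<Rightarrow> (nat \<Rightarrow> nat \<Rightarrow> complex) \<Rightarrow> real" where
  "mu_self M N X = Max (insert 0 {cmod (inner_col M X k X l) | k l. k < N \<and> l < N \<and> k \<noteq> l})"

definition mu_mutual :: "nat \<Rightarrow> nat \<Rightarrow> nat \<Rightarrow> (nat \<Rightarrow> nat \<Rightarrow> complex) \<Rightarrow> (nat \<Rightarrow> nat \<Rightarrow> complex) \<Rightarrow> real" where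
  "mu_mutual M Na Nb A B = Max (insert 0 {cmod (inner_col M A k B l) | k l. k < Na \<and> l < Nb})"

definition concat_mat :: "nat \<Rightarrow> (nat \<Rightarrow> nat \<Rightarrow> complex) \<Rightarrow> (nat \<Rightarrow> nat \<Rightarrow> complex) \<Rightarrow> nat \<Rightarrow> nat \<Rightarrow> complex" where
  "concat_mat Na A B = (\<lambda>i j. if j < Na then A i j else B i (j - Na))"

definition vnorm2 :: "nat \<Rightarrow> (nat \<Rightarrow> complex) \<Rightarrow> real" where
  "vnorm2 N v = (\<Sum>j<N. (cmod (v j))\<^sup>2)"

definition mat_vec :: "nat \<Rightarrow> nat \<Rightarrow> (nat \<Rightarrow> nat \<Rightarrow> complex) \<Rightarrow> (nat \<Rightarrow> complex) \<Rightarrow> nat \<Rightarrow> complex" where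
  "mat_vec M N X v = (\<lambda>i. \<Sum>j<N. X i j * v j)"

definition sparse :: "nat \<Rightarrow> nat \<Rightarrow> (nat \<Rightarrow> complex) \<Rightarrow> bool" where
  "sparse N s v \<longleftrightarrow> card {j. j < N \<and> v j \<noteq> 0} \<le> s"

definition ric :: "nat \<Rightarrow> nat \<Rightarrow> (nat \<Rightarrow> nat \<Rightarrow> complex) \<Rightarrow> nat \<Rightarrow> real" where
  "ric M N X s = Inf {d. \<forall>v. sparse N s v \<longrightarrow>
      (1 - d) * vnorm2 N v \<le> vnorm2 M (mat_vec M N X v) \<and>
      vnorm2 M (mat_vec M N X v) \<le> (1 + d) * vnorm2 N v}"

end

theory Submission imports Defs begin
lemma cs_card:
  fixes f :: "'a \<Rightarrow> real"
  assumes "finite S"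
  shows "(sum f S)\<^sup>2 \<le> real (card S) * (\<Sum>j\<in>S. (f j)\<^sup>2)"
proof -
  have "(sum f S)\<^sup>2 = (\<Sum>j\<in>S. \<Sum>k\<in>S. f j * f k)"
    by (simp add: power2_eq_square sum_product)
  also have "\<dots> \<le> (\<Sum>j\<in>S. \<Sum>k\<in>S. ((f j)\<^sup>2 + (f k)\<^sup>2) / 2)"
    by (intro sum_mono) (use sum_squares_bound in \<open>simp add: field_simps\<close>)
  also have "\<dots> = real (card S) * (\<Sum>j\<in>S. (f j)\<^sup>2)"
    by (simp add: sum.distrib add_divide_distrib sum_divide_distrib[symmetric] sum_distrib_left[symmetric] sum_distrib_right[symmetric] sum_constant)
  finally show ?thesis .
qed

lemma cs_supp:
  fixes f :: "'a \<Rightarrow> real"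
  assumes "finite S"
  shows "(sum f S)\<^sup>2 \<le> real (card {j\<in>S. f j \<noteq> 0}) * (\<Sum>j\<in>S. (f j)\<^sup>2)"
proof -
  have "sum f S = sum f {j\<in>S. f j \<noteq> 0}" by (rule sum.mono_neutral_right) (use assms in auto)
  moreover have "(\<Sum>j\<in>S. (f j)\<^sup>2) = (\<Sum>j\<in>{j\<in>S. f j \<noteq> 0}. (f j)\<^sup>2)"
    by (rule sum.mono_neutral_right) (use assms in auto)
  ultimately show ?thesis using cs_card[of "{j\<in>S. f j \<noteq> 0}" f] assms by simp
qed

lemma sq_le_sum:
  fixes f :: "'a \<Rightarrow> real"
  assumes "finite S" "\<And>j. j \<in> S \<Longrightarrow> f j \<ge> 0"
  shows "(\<Sum>j\<in>S. (f j)\<^sup>2) \<le> (sum f S)\<^sup>2"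
proof -
  have "(\<Sum>j\<in>S. (f j)\<^sup>2) = (\<Sum>j\<in>S. f j * f j)" by (simp add: power2_eq_square)
  also have "\<dots> \<le> (\<Sum>j\<in>S. f j * sum f S)"
    by (intro sum_mono mult_left_mono member_le_sum) (use assms in auto)
  also have "\<dots> = (sum f S)\<^sup>2" by (simp add: power2_eq_square sum_distrib_right)
  finally show ?thesis .
qed

lemma gram:
  "complex_of_real (vnorm2 M (mat_vec M N X v)) =
     (\<Sum>j<N. \<Sum>k<N. cnj (v j) * v k * inner_col M X j X k)"
proof -
  have "complex_of_real (vnorm2 M (mat_vec M N X v)) =
     (\<Sum>i<M. cnj (\<Sum>j<N. X i j * v j) * (\<Sum>k<N. X i k * v k))"
    unfolding vnorm2_def mat_vec_def of_real_sum
    by (intro sum.cong refl, subst complex_norm_square) (simp add: mult.commute)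
  also have "\<dots> = (\<Sum>i<M. \<Sum>j<N. \<Sum>k<N. cnj (v j) * v k * (cnj (X i j) * X i k))"
    apply (intro sum.cong refl)
    apply (simp add: sum_product cnj_sum)
    apply (intro sum.cong refl)
    apply (simp add: mult_ac)
    done
  also have "\<dots> = (\<Sum>j<N. \<Sum>k<N. \<Sum>i<M. cnj (v j) * v k * (cnj (X i j) * X i k))"
    by (subst sum.swap) (simp add: sum.swap[of _ "{..<M}"])
  also have "\<dots> = (\<Sum>j<N. \<Sum>k<N. cnj (v j) * v k * inner_col M X j X k)"
    by (simp add: inner_col_def sum_distrib_left)
  finally show ?thesis .
qed

lemma dev:
  assumes "\<forall>j<N. inner_col M X j X j = 1"
  shows "\<bar>vnorm2 M (mat_vec M N X v) - vnorm2 N v\<bar> \<le>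
    (\<Sum>j<N. \<Sum>k\<in>{..<N}-{j}. cmod (v j) * cmod (v k) * cmod (inner_col M X j X k))"
proof -
  define E where "E = (\<Sum>j<N. \<Sum>k\<in>{..<N}-{j}. cnj (v j) * v k * inner_col M X j X k)"
  have "complex_of_real (vnorm2 M (mat_vec M N X v)) =
     (\<Sum>j<N. cnj (v j) * v j * inner_col M X j X j + (\<Sum>k\<in>{..<N}-{j}. cnj (v j) * v k * inner_col M X j X k))"
    unfolding gram by (intro sum.cong refl) (simp add: sum.remove)
  also have "\<dots> = (\<Sum>j<N. complex_of_real ((cmod (v j))\<^sup>2)) + E"
  proof -
    have d: "\<And>j. cnj (v j) * v j = complex_of_real ((cmod (v j))\<^sup>2)"
      by (subst complex_norm_square) (simp add: mult.commute)
    show ?thesis unfolding E_def sum.distrib using assms by (simp add: d del: of_real_power)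
  qed
  finally have "complex_of_real (vnorm2 M (mat_vec M N X v) - vnorm2 N v) = E"
    by (simp add: vnorm2_def)
  then have "\<bar>vnorm2 M (mat_vec M N X v) - vnorm2 N v\<bar> = cmod E"
    by (metis norm_of_real)
  also have "\<dots> \<le> (\<Sum>j<N. cmod (\<Sum>k\<in>{..<N}-{j}. cnj (v j) * v k * inner_col M X j X k))"
    unfolding E_def by (rule norm_sum)
  also have "\<dots> \<le> (\<Sum>j<N. \<Sum>k\<in>{..<N}-{j}. cmod (cnj (v j) * v k * inner_col M X j X k))"
    by (intro sum_mono norm_sum)
  also have "\<dots> = (\<Sum>j<N. \<Sum>k\<in>{..<N}-{j}. cmod (v j) * cmod (v k) * cmod (inner_col M X j X k))"
    by (simp add: norm_mult)
  finally show ?thesis .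
qed

lemma sc1:
  fixes ma mb mm Qa Qb Fa Fb :: real and p q w :: nat
  assumes "ma\<ge>0" "mb\<ge>0" "mm\<ge>0" "mb\<le>ma" "Qa\<ge>0" "Qb\<ge>0" "Fa\<ge>0" "Fb\<ge>0"
    "Fa\<^sup>2\<le>p*Qa" "Fb\<^sup>2\<le>q*Qb" "Qa\<le>Fa\<^sup>2" "Qb\<le>Fb\<^sup>2" "p+q\<le>w"
  shows "ma*(Fa\<^sup>2-Qa) + mb*(Fb\<^sup>2-Qb) + 2*mm*Fa*Fb \<le>
    (1/2)*(ma*(real w-2) + real w*sqrt(ma\<^sup>2+mm\<^sup>2))*(Qa+Qb)"
proof -
  have h1: "ma*(Fa\<^sup>2-Qa) \<le> ma*((real p-1)*Qa)"
    using assms by (intro mult_left_mono) (auto simp: algebra_simps)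
  have h2: "mb*(Fb\<^sup>2-Qb) \<le> ma*((real q-1)*Qb)"
  proof (cases "q = 0")
    case True
    then have "Qb = 0" "Fb\<^sup>2 = 0" using assms by auto
    then show ?thesis by simp
  next
    case False
    have a: "Fb\<^sup>2-Qb \<le> (real q-1)*Qb" using assms by (auto simp: algebra_simps)
    have b: "0 \<le> (real q-1)*Qb" using False assms by auto
    have "mb*(Fb\<^sup>2-Qb) \<le> mb*((real q-1)*Qb)" using a assms by (intro mult_left_mono) auto
    also have "\<dots> \<le> ma*((real q-1)*Qb)" using b assms by (intro mult_right_mono) auto
    finally show ?thesis .
  qed
  have sa: "Fa \<le> sqrt (real p * Qa)" using assms by (intro real_le_rsqrt) auto
  have sb: "Fb \<le> sqrt (real q * Qb)" using assms by (intro real_le_rsqrt) auto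
  have h3: "Fa*Fb \<le> sqrt (real p * real q) * sqrt (Qa*Qb)"
  proof -
    have "Fa*Fb \<le> sqrt (real p * Qa) * sqrt (real q * Qb)"
      using sa sb assms by (intro mult_mono) auto
    also have "\<dots> = sqrt (real p * real q) * sqrt (Qa*Qb)"
      by (simp add: real_sqrt_mult[symmetric] mult_ac)
    finally show ?thesis .
  qed
  define al where "al = ma*(real p - real q)/2"
  define be where "be = mm * sqrt (real p * real q)"
  define X where "X = Qa - Qb"
  define Y where "Y = 2 * sqrt (Qa*Qb)"
  have Y2: "Y\<^sup>2 = 4*Qa*Qb" unfolding Y_def using assms by (simp add: power_mult_distrib)
  have XY: "X\<^sup>2 + Y\<^sup>2 = (Qa+Qb)\<^sup>2" using Y2 unfolding X_def by (simp add: power2_eq_square algebra_simps)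
  have h4: "ma*((real p-1)*Qa) + ma*((real q-1)*Qb) + 2*mm*(sqrt (real p * real q) * sqrt (Qa*Qb))
      = ma*(real p + real q - 2)*(Qa+Qb)/2 + (al*X + be*Y)"
    unfolding al_def be_def X_def Y_def by (simp add: algebra_simps) (simp add: field_simps)
  have h5: "al*X + be*Y \<le> sqrt (al\<^sup>2+be\<^sup>2) * (Qa+Qb)"
  proof -
    have "(al*X + be*Y)\<^sup>2 \<le> (al\<^sup>2+be\<^sup>2) * (X\<^sup>2+Y\<^sup>2)"
    proof -
      have "(al*X + be*Y)\<^sup>2 + (al*Y - be*X)\<^sup>2 = (al\<^sup>2+be\<^sup>2) * (X\<^sup>2+Y\<^sup>2)"
        by (simp add: power2_eq_square algebra_simps)
      moreover have "0 \<le> (al*Y - be*X)\<^sup>2" by simp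
      ultimately show ?thesis by linarith
    qed
    then have "al*X + be*Y \<le> sqrt ((al\<^sup>2+be\<^sup>2) * (Qa+Qb)\<^sup>2)" using XY by (intro real_le_rsqrt) simp
    also have "\<dots> = sqrt (al\<^sup>2+be\<^sup>2) * (Qa+Qb)" using assms by (simp add: real_sqrt_mult)
    finally show ?thesis .
  qed
  have h6: "sqrt (al\<^sup>2+be\<^sup>2) \<le> sqrt (ma\<^sup>2+mm\<^sup>2) * ((real p + real q)/2)"
  proof -
    have pq: "real p * real q \<le> ((real p + real q)/2)\<^sup>2"
    proof -
      have "((real p + real q)/2)\<^sup>2 - real p * real q = ((real p - real q)/2)\<^sup>2"
        by (simp add: power2_eq_square field_simps)
      moreover have "0 \<le> ((real p - real q)/2)\<^sup>2" by simp
      ultimately show ?thesis by linarith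
    qed
    have pq2: "((real p - real q)/2)\<^sup>2 \<le> ((real p + real q)/2)\<^sup>2"
      by (simp add: power2_eq_square field_simps)
    have "al\<^sup>2+be\<^sup>2 = ma\<^sup>2 * ((real p - real q)/2)\<^sup>2 + mm\<^sup>2 * (real p * real q)"
      unfolding al_def be_def by (simp add: power_mult_distrib power_divide)
    also have "\<dots> \<le> ma\<^sup>2 * ((real p + real q)/2)\<^sup>2 + mm\<^sup>2 * ((real p + real q)/2)\<^sup>2"
      using pq pq2 by (intro add_mono mult_left_mono) auto
    also have "\<dots> = (ma\<^sup>2+mm\<^sup>2) * ((real p + real q)/2)\<^sup>2" by (simp add: algebra_simps)
    finally have "sqrt (al\<^sup>2+be\<^sup>2) \<le> sqrt ((ma\<^sup>2+mm\<^sup>2) * ((real p + real q)/2)\<^sup>2)"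
      by (rule real_sqrt_le_mono)
    also have "\<dots> = sqrt (ma\<^sup>2+mm\<^sup>2) * ((real p + real q)/2)" by (simp add: real_sqrt_mult)
    finally show ?thesis .
  qed
  have S0: "ma \<le> sqrt (ma\<^sup>2+mm\<^sup>2)" by (intro real_le_rsqrt) simp
  have h7: "ma*(real p + real q - 2)/2 + sqrt (ma\<^sup>2+mm\<^sup>2) * ((real p + real q)/2)
      \<le> (1/2)*(ma*(real w-2) + real w*sqrt(ma\<^sup>2+mm\<^sup>2))"
  proof -
    have w: "real p + real q \<le> real w" using assms(13) by linarith
    have "(ma + sqrt (ma\<^sup>2+mm\<^sup>2)) * (real p + real q) \<le> (ma + sqrt (ma\<^sup>2+mm\<^sup>2)) * real w"
      using w S0 assms(1) by (intro mult_left_mono) auto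
    then show ?thesis by (simp add: algebra_simps) (simp add: field_simps)
  qed
  have "ma*(Fa\<^sup>2-Qa) + mb*(Fb\<^sup>2-Qb) + 2*mm*Fa*Fb \<le>
      ma*((real p-1)*Qa) + ma*((real q-1)*Qb) + 2*mm*(sqrt (real p * real q) * sqrt (Qa*Qb))"
  proof -
    have "2*mm*(Fa*Fb) \<le> 2*mm*(sqrt (real p * real q) * sqrt (Qa*Qb))"
      using h3 assms(3) by (intro mult_left_mono) auto
    then show ?thesis using h1 h2 by (simp add: mult.assoc)
  qed
  also have "\<dots> \<le> ma*(real p + real q - 2)*(Qa+Qb)/2 + sqrt (ma\<^sup>2+mm\<^sup>2) * ((real p + real q)/2) * (Qa+Qb)"
  proof -
    have "sqrt (al\<^sup>2+be\<^sup>2) * (Qa+Qb) \<le> sqrt (ma\<^sup>2+mm\<^sup>2) * ((real p + real q)/2) * (Qa+Qb)"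
      using h6 assms(5,6) by (intro mult_right_mono) auto
    then show ?thesis unfolding h4 using h5 by linarith
  qed
  also have "\<dots> = (ma*(real p + real q - 2)/2 + sqrt (ma\<^sup>2+mm\<^sup>2) * ((real p + real q)/2)) * (Qa+Qb)"
    by (simp add: algebra_simps)
  also have "\<dots> \<le> (1/2)*(ma*(real w-2) + real w*sqrt(ma\<^sup>2+mm\<^sup>2))*(Qa+Qb)"
    using h7 assms(5,6) by (intro mult_right_mono) auto
  finally show ?thesis .
qed

lemma split_sum: "sum (h::nat\<Rightarrow>real) {..<Na+Nb} = sum h {..<Na} + sum h {Na..<Na+Nb}"
  using sum.atLeastLessThan_concat[of 0 Na "Na+Nb" h] by (simp add: atLeast0LessThan)

lemma fin_pairs: "finite {g k l | k l. k < (N::nat) \<and> l < (N'::nat) \<and> P k l}"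
proof -
  have "{g k l | k l. k < N \<and> l < N' \<and> P k l} \<subseteq> (\<lambda>(k,l). g k l) ` ({..<N} \<times> {..<N'})"
    by auto
  then show ?thesis by (rule finite_subset) auto
qed

lemma fin_pairs2: "finite {g k l | k l. k < (N::nat) \<and> l < (N'::nat)}"
  using fin_pairs[of g N N' "\<lambda>_ _. True"] by simp

lemma mu_self_nonneg: "mu_self M N X \<ge> 0"
  unfolding mu_self_def apply (rule Max_ge) apply (simp add: fin_pairs) apply blast done

lemma mu_mutual_nonneg: "mu_mutual M Na Nb A B \<ge> 0"
  unfolding mu_mutual_def apply (rule Max_ge) apply (simp add: fin_pairs2) apply blast done

lemma mu_self_ge: "k < N \<Longrightarrow> l < N \<Longrightarrow> k \<noteq> l \<Longrightarrow> cmod (inner_col M X k X l) \<le> mu_self M N X"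
  unfolding mu_self_def apply (rule Max_ge) apply (simp add: fin_pairs) apply blast done

lemma mu_mutual_ge: "k < Na \<Longrightarrow> l < Nb \<Longrightarrow> cmod (inner_col M A k B l) \<le> mu_mutual M Na Nb A B"
  unfolding mu_mutual_def apply (rule Max_ge) apply (simp add: fin_pairs2) apply blast done

lemma inner_diag: "unit_cols M N X \<Longrightarrow> j < N \<Longrightarrow> inner_col M X j X j = 1"
proof -
  assume u: "unit_cols M N X" and j: "j < N"
  have "inner_col M X j X j = (\<Sum>i<M. complex_of_real ((cmod (X i j))\<^sup>2))"
    unfolding inner_col_def
    by (intro sum.cong refl, subst complex_norm_square) (simp add: mult.commute)
  also have "\<dots> = complex_of_real (\<Sum>i<M. (cmod (X i j))\<^sup>2)" by simp
  also have "\<dots> = 1" using u j unfolding unit_cols_def by simp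
  finally show ?thesis .
qed

lemma inner_concat: "inner_col M (concat_mat Na A B) j (concat_mat Na A B) k =
   (if j < Na then (if k < Na then inner_col M A j A k else inner_col M A j B (k - Na))
    else (if k < Na then cnj (inner_col M A k B (j - Na)) else inner_col M B (j - Na) B (k - Na)))"
  unfolding inner_col_def concat_mat_def by (auto simp: mult.commute)

lemma off_split:
  assumes "finite S"
  shows "(\<Sum>j\<in>S. \<Sum>k\<in>S-{j}. g j k) = (\<Sum>j\<in>S. \<Sum>k\<in>S. g j k) - (\<Sum>j\<in>S. g j j :: real)"
proof -
  have "(\<Sum>j\<in>S. \<Sum>k\<in>S. g j k) = (\<Sum>j\<in>S. g j j + (\<Sum>k\<in>S-{j}. g j k))"
    using assms by (intro sum.cong refl) (simp add: sum.remove)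
  then show ?thesis by (simp add: sum.distrib)
qed

lemma blk:
  assumes "\<And>j k. j \<in> S \<Longrightarrow> k \<in> T \<Longrightarrow> c j k = (m::real)"
  shows "(\<Sum>j\<in>S. \<Sum>k\<in>T. f j * f k * c j k) = m * sum f S * sum f T"
proof -
  have "(\<Sum>j\<in>S. \<Sum>k\<in>T. f j * f k * c j k) = (\<Sum>j\<in>S. \<Sum>k\<in>T. m * (f j * f k))"
    using assms by (intro sum.cong refl) (simp add: mult_ac)
  then show ?thesis by (simp add: sum_distrib_left sum_distrib_right sum_product mult_ac)
qed

lemma dblk:
  assumes "\<And>j. j \<in> S \<Longrightarrow> c j j = (m::real)"
  shows "(\<Sum>j\<in>S. f j * f j * c j j) = m * (\<Sum>j\<in>S. (f j)\<^sup>2)"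
  using assms by (simp add: sum_distrib_left power2_eq_square mult_ac)

lemma off_mono:
  assumes "\<And>j k. j < N \<Longrightarrow> k < N \<Longrightarrow> j \<noteq> k \<Longrightarrow> cmod (G j k) \<le> (c j k :: real)"
  shows "(\<Sum>j<N. \<Sum>k\<in>{..<N}-{j}. cmod (v j) * cmod (v k) * cmod (G j k)) \<le>
         (\<Sum>j<N. \<Sum>k\<in>{..<N}-{j}. cmod (v j) * cmod (v k) * c j k)"
  using assms by (intro sum_mono mult_left_mono) auto

lemma bounds:
  fixes M Na Nb w :: nat and A B :: "nat \<Rightarrow> nat \<Rightarrow> complex" and v :: "nat \<Rightarrow> complex"
  assumes "unit_cols M Na A" and "unit_cols M Nb B"
    and "mu_self M Nb B \<le> mu_self M Na A" and sp: "sparse (Na + Nb) w v"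
  defines "ma \<equiv> mu_self M Na A" and "mb \<equiv> mu_self M Nb B" and "mm \<equiv> mu_mutual M Na Nb A B"
    and "D \<equiv> concat_mat Na A B" and "N \<equiv> Na + Nb"
  shows "\<bar>vnorm2 M (mat_vec M N D v) - vnorm2 N v\<bar> \<le>
           (1/2) * (ma * (real w - 2) + real w * sqrt (ma\<^sup>2 + mm\<^sup>2)) * vnorm2 N v"
    and "\<bar>vnorm2 M (mat_vec M N D v) - vnorm2 N v\<bar> \<le>
           (max ma (max mb mm) * (real w - 1)) * vnorm2 N v"
proof -
  define f where "f j = cmod (v j)" for j
  define G where "G j k = inner_col M D j D k" for j k
  define Ia where "Ia = {..<Na}"
  define Ib where "Ib = {Na..<Na+Nb}"
  have ma0: "ma \<ge> 0" "mb \<ge> 0" "mm \<ge> 0"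
    unfolding ma_def mb_def mm_def by (auto intro: mu_self_nonneg mu_mutual_nonneg)
  have diag: "\<forall>j<N. inner_col M D j D j = 1"
  proof (intro allI impI)
    fix j assume "j < N"
    then show "inner_col M D j D j = 1"
      unfolding D_def inner_concat using assms(1,2) inner_diag N_def by auto
  qed
  define c where "c j k = (if j < Na then (if k < Na then ma else mm) else (if k < Na then mm else mb))" for j k
  have coh: "cmod (G j k) \<le> c j k" if "j < N" "k < N" "j \<noteq> k" for j k
  proof -
    have "k - Na < Nb" if "\<not> k < Na" using \<open>k < N\<close> N_def that by linarith
    moreover have "j - Na < Nb" if "\<not> j < Na" using \<open>j < N\<close> N_def that by linarith
    moreover have "j - Na \<noteq> k - Na" if "\<not> j < Na" "\<not> k < Na" using that \<open>j \<noteq> k\<close> by linarith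
    ultimately show ?thesis
      unfolding G_def c_def D_def inner_concat ma_def mb_def mm_def
      using that by (auto intro: mu_self_ge mu_mutual_ge)
  qed
  have c_le: "c j k \<le> max ma (max mb mm)" for j k unfolding c_def by auto
  have dv: "\<bar>vnorm2 M (mat_vec M N D v) - vnorm2 N v\<bar> \<le>
      (\<Sum>j<N. \<Sum>k\<in>{..<N}-{j}. f j * f k * cmod (G j k))"
    unfolding f_def G_def by (rule dev[OF diag])
  have f0: "f j \<ge> 0" for j unfolding f_def by simp
  have fne: "(f j \<noteq> 0) = (v j \<noteq> 0)" for j unfolding f_def by simp
  have Q: "vnorm2 N v = (\<Sum>j<N. (f j)\<^sup>2)" unfolding vnorm2_def f_def ..
  have sN: "card {j\<in>{..<N}. f j \<noteq> 0} \<le> w"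
    using sp unfolding sparse_def N_def fne by (simp add: lessThan_def)
  have off2: "(\<Sum>j<N. \<Sum>k\<in>{..<N}-{j}. f j * f k * cmod (G j k)) \<le>
      (\<Sum>j<N. \<Sum>k\<in>{..<N}-{j}. f j * f k * max ma (max mb mm))"
    unfolding f_def by (rule off_mono) (meson coh c_le order_trans)
  also have "\<dots> = max ma (max mb mm) * ((sum f {..<N})\<^sup>2 - (\<Sum>j<N. (f j)\<^sup>2))"
    by (simp add: off_split blk[where m="max ma (max mb mm)"] dblk[where m="max ma (max mb mm)"]
         right_diff_distrib power2_eq_square) (simp add: sum_distrib_left mult_ac)
  also have "\<dots> \<le> max ma (max mb mm) * ((real w - 1) * (\<Sum>j<N. (f j)\<^sup>2))"
  proof (intro mult_left_mono)
    have "(sum f {..<N})\<^sup>2 \<le> real (card {j\<in>{..<N}. f j \<noteq> 0}) * (\<Sum>j<N. (f j)\<^sup>2)"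
      by (rule cs_supp) simp
    also have "\<dots> \<le> real w * (\<Sum>j<N. (f j)\<^sup>2)"
      using sN by (intro mult_right_mono) (auto intro: sum_nonneg)
    finally show "(sum f {..<N})\<^sup>2 - (\<Sum>j<N. (f j)\<^sup>2) \<le> (real w - 1) * (\<Sum>j<N. (f j)\<^sup>2)"
      by (simp add: algebra_simps)
  qed (use ma0 in auto)
  finally show "\<bar>vnorm2 M (mat_vec M N D v) - vnorm2 N v\<bar> \<le>
           (max ma (max mb mm) * (real w - 1)) * vnorm2 N v"
    using dv Q by (simp add: mult_ac)
  define Fa where "Fa = sum f Ia"
  define Fb where "Fb = sum f Ib"
  define Qa where "Qa = (\<Sum>j\<in>Ia. (f j)\<^sup>2)"
  define Qb where "Qb = (\<Sum>j\<in>Ib. (f j)\<^sup>2)"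
  have spl: "sum h {..<N} = sum h Ia + sum h Ib" for h :: "nat \<Rightarrow> real"
    unfolding N_def Ia_def Ib_def by (rule split_sum)
  have "(\<Sum>j<N. \<Sum>k\<in>{..<N}-{j}. f j * f k * cmod (G j k)) \<le>
      (\<Sum>j<N. \<Sum>k\<in>{..<N}-{j}. f j * f k * c j k)"
    unfolding f_def by (rule off_mono) (rule coh)
  also have "\<dots> = (\<Sum>j<N. \<Sum>k<N. f j * f k * c j k) - (\<Sum>j<N. f j * f j * c j j)"
    by (simp add: off_split)
  also have "(\<Sum>j<N. \<Sum>k<N. f j * f k * c j k) =
      (\<Sum>j\<in>Ia. \<Sum>k\<in>Ia. f j * f k * c j k) + (\<Sum>j\<in>Ia. \<Sum>k\<in>Ib. f j * f k * c j k)
    + (\<Sum>j\<in>Ib. \<Sum>k\<in>Ia. f j * f k * c j k) + (\<Sum>j\<in>Ib. \<Sum>k\<in>Ib. f j * f k * c j k)"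
    by (simp add: spl sum.distrib)
  also have "\<dots> = ma * Fa * Fa + mm * Fa * Fb + mm * Fb * Fa + mb * Fb * Fb"
  proof -
    have b1: "(\<Sum>j\<in>Ia. \<Sum>k\<in>Ia. f j * f k * c j k) = ma * Fa * Fa"
      unfolding Fa_def by (rule blk) (simp add: Ia_def c_def)
    have b2: "(\<Sum>j\<in>Ia. \<Sum>k\<in>Ib. f j * f k * c j k) = mm * Fa * Fb"
      unfolding Fa_def Fb_def by (rule blk) (simp add: Ia_def Ib_def c_def)
    have b3: "(\<Sum>j\<in>Ib. \<Sum>k\<in>Ia. f j * f k * c j k) = mm * Fb * Fa"
      unfolding Fa_def Fb_def by (rule blk) (simp add: Ia_def Ib_def c_def)
    have b4: "(\<Sum>j\<in>Ib. \<Sum>k\<in>Ib. f j * f k * c j k) = mb * Fb * Fb"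
      unfolding Fb_def by (rule blk) (simp add: Ib_def c_def)
    show ?thesis by (simp only: b1 b2 b3 b4)
  qed
  also have "(\<Sum>j<N. f j * f j * c j j) = ma * Qa + mb * Qb"
  proof -
    have d1: "(\<Sum>j\<in>Ia. f j * f j * c j j) = ma * Qa"
      unfolding Qa_def by (rule dblk) (simp add: Ia_def c_def)
    have d2: "(\<Sum>j\<in>Ib. f j * f j * c j j) = mb * Qb"
      unfolding Qb_def by (rule dblk) (simp add: Ib_def c_def)
    show ?thesis by (simp only: spl d1 d2)
  qed
  finally have o1: "(\<Sum>j<N. \<Sum>k\<in>{..<N}-{j}. f j * f k * cmod (G j k)) \<le>
     ma*(Fa\<^sup>2-Qa) + mb*(Fb\<^sup>2-Qb) + 2*mm*Fa*Fb"
    by (simp add: power2_eq_square algebra_simps)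
  define p where "p = card {j\<in>Ia. f j \<noteq> 0}"
  define q where "q = card {j\<in>Ib. f j \<noteq> 0}"
  have e: "{j\<in>{..<N}. f j \<noteq> 0} = {j\<in>Ia. f j \<noteq> 0} \<union> {j\<in>Ib. f j \<noteq> 0}"
    unfolding Ia_def Ib_def N_def by auto
  have "p + q = card ({j\<in>Ia. f j \<noteq> 0} \<union> {j\<in>Ib. f j \<noteq> 0})"
    unfolding p_def q_def by (rule card_Un_disjoint[symmetric]) (auto simp: Ia_def Ib_def)
  then have "p + q = card {j\<in>{..<N}. f j \<noteq> 0}" using e by simp
  then have pqw: "p + q \<le> w" using sN by simp
  have fin: "finite Ia" "finite Ib" unfolding Ia_def Ib_def by auto
  have nn1: "Qa\<ge>0" unfolding Qa_def by (rule sum_nonneg) simp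
  have nn2: "Qb\<ge>0" unfolding Qb_def by (rule sum_nonneg) simp
  have nn3: "Fa\<ge>0" unfolding Fa_def by (rule sum_nonneg) (rule f0)
  have nn4: "Fb\<ge>0" unfolding Fb_def by (rule sum_nonneg) (rule f0)
  have mba: "mb \<le> ma" using assms(3) unfolding ma_def mb_def .
  have "ma*(Fa\<^sup>2-Qa) + mb*(Fb\<^sup>2-Qb) + 2*mm*Fa*Fb \<le>
      (1/2)*(ma*(real w-2) + real w*sqrt(ma\<^sup>2+mm\<^sup>2))*(Qa+Qb)"
  proof (rule sc1)
    show "Fa\<^sup>2 \<le> real p * Qa" unfolding Fa_def Qa_def p_def by (rule cs_supp[OF fin(1)])
    show "Fb\<^sup>2 \<le> real q * Qb" unfolding Fb_def Qb_def q_def by (rule cs_supp[OF fin(2)])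
    show "Qa \<le> Fa\<^sup>2" unfolding Fa_def Qa_def using fin f0 by (intro sq_le_sum) auto
    show "Qb \<le> Fb\<^sup>2" unfolding Fb_def Qb_def using fin f0 by (intro sq_le_sum) auto
  qed (rule ma0 pqw nn1 nn2 nn3 nn4 mba)+
  then have "\<bar>vnorm2 M (mat_vec M N D v) - vnorm2 N v\<bar> \<le>
           (1/2) * (ma * (real w - 2) + real w * sqrt (ma\<^sup>2 + mm\<^sup>2)) * (Qa + Qb)"
    using dv o1 by linarith
  moreover have "vnorm2 N v = Qa + Qb" unfolding Q spl Qa_def Qb_def ..
  ultimately show "\<bar>vnorm2 M (mat_vec M N D v) - vnorm2 N v\<bar> \<le>
           (1/2) * (ma * (real w - 2) + real w * sqrt (ma\<^sup>2 + mm\<^sup>2)) * vnorm2 N v"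
    by simp
qed

theorem lemma2:
  fixes M Na Nb w :: nat and A B :: "nat \<Rightarrow> nat \<Rightarrow> complex"
  assumes "Na \<ge> 1" and "Nb \<ge> 1" and "w \<ge> 1"
    and "unit_cols M Na A" and "unit_cols M Nb B"
    and "mu_self M Nb B \<le> mu_self M Na A"
  shows "ric M (Na + Nb) (concat_mat Na A B) w \<le>
    min ((1/2) * (mu_self M Na A * (real w - 2) +
                  real w * sqrt ((mu_self M Na A)\<^sup>2 + (mu_mutual M Na Nb A B)\<^sup>2)))
        (max (mu_self M Na A) (max (mu_self M Nb B) (mu_mutual M Na Nb A B)) * (real w - 1))"
proof -
  define N where "N = Na + Nb"
  define D where "D = concat_mat Na A B"
  define S where "S = {d. \<forall>v. sparse N w v \<longrightarrow>
      (1 - d) * vnorm2 N v \<le> vnorm2 M (mat_vec M N D v) \<and>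
      vnorm2 M (mat_vec M N D v) \<le> (1 + d) * vnorm2 N v}"
  have ric: "ric M (Na + Nb) (concat_mat Na A B) w = Inf S"
    unfolding ric_def S_def N_def D_def ..
  have mem: "b \<in> S" if h: "\<And>v. sparse N w v \<Longrightarrow>
      \<bar>vnorm2 M (mat_vec M N D v) - vnorm2 N v\<bar> \<le> b * vnorm2 N v" for b
    unfolding S_def
  proof (intro CollectI allI impI conjI)
    fix v assume "sparse N w v"
    from h[OF this] show "(1 - b) * vnorm2 N v \<le> vnorm2 M (mat_vec M N D v)"
      "vnorm2 M (mat_vec M N D v) \<le> (1 + b) * vnorm2 N v"
      by (simp_all add: algebra_simps abs_le_iff)
  qed
  have m1: "(1/2) * (mu_self M Na A * (real w - 2) +
                  real w * sqrt ((mu_self M Na A)\<^sup>2 + (mu_mutual M Na Nb A B)\<^sup>2)) \<in> S"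
    by (rule mem) (use bounds(1)[OF assms(4,5,6)] in \<open>simp add: N_def D_def\<close>)
  have m2: "max (mu_self M Na A) (max (mu_self M Nb B) (mu_mutual M Na Nb A B)) * (real w - 1) \<in> S"
    by (rule mem) (use bounds(2)[OF assms(4,5,6)] in \<open>simp add: N_def D_def\<close>)
  have bdd: "bdd_below S"
  proof (rule bdd_belowI)
    fix d assume "d \<in> S"
    define e :: "nat \<Rightarrow> complex" where "e j = (if j = 0 then 1 else 0)" for j
    have "{j. j < N \<and> e j \<noteq> 0} = {0}" using assms(1) unfolding e_def N_def by auto
    then have sp: "sparse N w e" unfolding sparse_def using assms(3) by simp
    have n1: "vnorm2 N e = 1"
    proof -
      have "vnorm2 N e = (\<Sum>j<N. if j = 0 then 1 else 0)"
        unfolding vnorm2_def by (intro sum.cong) (auto simp: e_def)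
      also have "\<dots> = 1" using assms(1) N_def by simp
      finally show ?thesis .
    qed
    have "mat_vec M N D e = (\<lambda>i. A i 0)"
      unfolding mat_vec_def e_def D_def concat_mat_def using assms(1) N_def
      by (simp add: if_distrib[of "\<lambda>x. _ * x"] sum.delta cong: if_cong)
    then have n2: "vnorm2 M (mat_vec M N D e) = 1"
      using assms(1,4) unfolding vnorm2_def unit_cols_def by simp
    from \<open>d \<in> S\<close> sp have "(1 - d) * vnorm2 N e \<le> vnorm2 M (mat_vec M N D e)"
      unfolding S_def by blast
    then show "0 \<le> d" using n1 n2 by simp
  qed
  show ?thesis unfolding ric using cInf_lower[OF m1 bdd] cInf_lower[OF m2 bdd] by simp
qed

end
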